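(* Let $G$ be a cubic graph, let $M$ be a perfect matching cut of $G$, and let $C$ be an induced $4$-vertex cycle of $G$. Then exactly one of the following holds: (a) $E(C) \cap M = \emptyset$ and all four outgoing edges of $V(C)$ belong to $M$; (b) $|E(C) \cap M| = 2$, the two edges of $E(C) \cap M$ are vertex-disjoint, and no outgoing edge of $V(C)$ belongs to $M$.
   Context: All graphs are finite, simple and undirected; a graph is cubic if every vertex has exactly three neighbours. A cutset of $G$ is a set $M \subseteq E(G)$ for which there is a bipartition $X \uplus Y = V(G)$ into two nonempty sets such that $M$ is exactly the set of edges with one endpoint in $X$ and one in $Y$. A perfect matching cut is a perfect matching (a set of edges covering every vertex exactly once) that is also a cutset. For $U \subseteq V(G)$, the outgoing edges of $U$ are the edges of $G$ with exactly one endpoint in $U$. For a subgraph $C$, $E(C)$ and $V(C)$ denote its edge set and vertex set. *)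

theory Defs
  imports Main
begin

definition simple_graph :: "'a set \<Rightarrow> 'a set set \<Rightarrow> bool" where
  "simple_graph V E \<longleftrightarrow> finite V \<and> (\<forall>e\<in>E. e \<subseteq> V \<and> card e = 2)"

definition neighbours :: "'a set set \<Rightarrow> 'a \<Rightarrow> 'a set" where
  "neighbours E v = {u. {u, v} \<in> E}"

definition cubic :: "'a set \<Rightarrow> 'a set set \<Rightarrow> bool" where
  "cubic V E \<longleftrightarrow> simple_graph V E \<and> (\<forall>v\<in>V. card (neighbours E v) = 3)"

definition outgoing :: "'a set set \<Rightarrow> 'a set \<Rightarrow> 'a set set" where
  "outgoing E U = {e\<in>E. card (e \<inter> U) = 1}"

definition perfect_matching :: "'a set \<Rightarrow> 'a set set \<Rightarrow> 'a set set \<Rightarrow> bool" where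
  "perfect_matching V E M \<longleftrightarrow> M \<subseteq> E \<and> (\<forall>v\<in>V. \<exists>!e. e \<in> M \<and> v \<in> e)"

definition cutset :: "'a set \<Rightarrow> 'a set set \<Rightarrow> 'a set set \<Rightarrow> bool" where
  "cutset V E M \<longleftrightarrow> (\<exists>X Y. X \<union> Y = V \<and> X \<inter> Y = {} \<and> X \<noteq> {} \<and> Y \<noteq> {}
       \<and> M = {e\<in>E. e \<inter> X \<noteq> {} \<and> e \<inter> Y \<noteq> {}})"

definition perfect_matching_cut :: "'a set \<Rightarrow> 'a set set \<Rightarrow> 'a set set \<Rightarrow> bool" where
  "perfect_matching_cut V E M \<longleftrightarrow> perfect_matching V E M \<and> cutset V E M"

definition induced_C4 :: "'a set \<Rightarrow> 'a set set \<Rightarrow> 'a \<Rightarrow> 'a \<Rightarrow> 'a \<Rightarrow> 'a \<Rightarrow> bool" where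
  "induced_C4 V E a b c d \<longleftrightarrow> {a,b,c,d} \<subseteq> V \<and> card {a,b,c,d} = 4 \<and>
     {a,b} \<in> E \<and> {b,c} \<in> E \<and> {c,d} \<in> E \<and> {d,a} \<in> E \<and>
     {a,c} \<notin> E \<and> {b,d} \<notin> E"

definition C4_edges :: "'a \<Rightarrow> 'a \<Rightarrow> 'a \<Rightarrow> 'a \<Rightarrow> 'a set set" where
  "C4_edges a b c d = {{a,b},{b,c},{c,d},{d,a}}"

end

theory Submission
  imports Defs
begin

lemma edge2: "card e = 2 \<Longrightarrow> v \<in> e \<Longrightarrow> \<exists>u. e = {v,u} \<and> u \<noteq> v"
  by (metis card_2_iff insertE insert_commute singletonD)

lemma nb: "{u,v} \<in> E \<Longrightarrow> u \<in> neighbours E v"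
  by (simp add: neighbours_def)

lemma out_in_M:
  assumes "cubic V E" "perfect_matching V E M" "v \<in> V" "n1 \<noteq> n2"
    "{v,n1} \<in> E" "{v,n2} \<in> E" "{v,n1} \<notin> M" "{v,n2} \<notin> M"
    "e \<in> E" "v \<in> e" "n1 \<notin> e" "n2 \<notin> e"
  shows "e \<in> M"
proof -
  obtain f where f: "f \<in> M" "v \<in> f" using assms(2,3) unfolding perfect_matching_def by blast
  have fE: "f \<in> E" using f assms(2) unfolding perfect_matching_def by blast
  have sg: "simple_graph V E" and c3: "card (neighbours E v) = 3"
    using assms(1,3) unfolding cubic_def by auto
  have "card f = 2" using sg fE unfolding simple_graph_def by blast
  then obtain w where w: "f = {v,w}" "w \<noteq> v" using edge2[OF _ f(2)] by metis
  have "card e = 2" using sg assms(9) unfolding simple_graph_def by blast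
  then obtain u where u: "e = {v,u}" "u \<noteq> v" using edge2[OF _ assms(10)] by metis
  show ?thesis
  proof (rule ccontr)
    assume "e \<notin> M"
    then have "u \<noteq> w" using f w u by auto
    have "w \<noteq> n1" "w \<noteq> n2" using f w assms(7,8) by auto
    have "u \<noteq> n1" "u \<noteq> n2" using u assms(11,12) by auto
    have fin: "finite (neighbours E v)" using c3 card.infinite by fastforce
    have sub: "{n1,n2,w,u} \<subseteq> neighbours E v"
      using assms(5,6) fE w assms(9) u by (auto simp: neighbours_def insert_commute)
    have "card {n1,n2,w,u} = 4" using \<open>u \<noteq> w\<close> \<open>w \<noteq> n1\<close> \<open>w \<noteq> n2\<close> \<open>u \<noteq> n1\<close> \<open>u \<noteq> n2\<close> assms(4)
      by auto
    then show False using card_mono[OF fin sub] c3 by simp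
  qed
qed

definition isA where
  "isA E M a b c d = (C4_edges a b c d \<inter> M = {} \<and> outgoing E {a,b,c,d} \<subseteq> M)"
definition isB where
  "isB E M a b c d = (card (C4_edges a b c d \<inter> M) = 2 \<and>
     (\<forall>e\<in>C4_edges a b c d \<inter> M. \<forall>f\<in>C4_edges a b c d \<inter> M. e \<noteq> f \<longrightarrow> e \<inter> f = {})
                  \<and> outgoing E {a,b,c,d} \<inter> M = {})"

lemma setrot: "{b,c,d,a} = {a,b,c,d}" by auto
lemma C4rot: "C4_edges b c d a = C4_edges a b c d" unfolding C4_edges_def by (simp add: insert_commute)
lemma isA_rot: "isA E M b c d a = isA E M a b c d" unfolding isA_def setrot[where a=a and b=b and c=c and d=d] C4rot[where a=a and b=b and c=c and d=d] ..
lemma isB_rot: "isB E M b c d a = isB E M a b c d" unfolding isB_def setrot[where a=a and b=b and c=c and d=d] C4rot[where a=a and b=b and c=c and d=d] ..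
lemma ind_rot: "induced_C4 V E a b c d \<Longrightarrow> induced_C4 V E b c d a"
  unfolding induced_C4_def setrot[where a=a and b=b and c=c and d=d] by (auto simp: insert_commute)

lemma dist: "induced_C4 V E a b c d \<Longrightarrow> a \<noteq> b \<and> a \<noteq> c \<and> a \<noteq> d \<and> b \<noteq> c \<and> b \<noteq> d \<and> c \<noteq> d"
proof -
  assume "induced_C4 V E a b c d"
  then have "card (set [a,b,c,d]) = length [a,b,c,d]" unfolding induced_C4_def by simp
  then have "distinct [a,b,c,d]" by (rule card_distinct)
  then show ?thesis by simp
qed

lemma caseA:
  assumes "cubic V E" "perfect_matching V E M" "X \<union> Y = V" "X \<inter> Y = {}"
    "M = {e\<in>E. e \<inter> X \<noteq> {} \<and> e \<inter> Y \<noteq> {}}" "induced_C4 V E a b c d"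
    "{a,b,c,d} \<subseteq> X"
  shows "isA E M a b c d"
proof -
  have D: "a \<noteq> b \<and> a \<noteq> c \<and> a \<noteq> d \<and> b \<noteq> c \<and> b \<noteq> d \<and> c \<noteq> d" using dist[OF assms(6)] .
  have I: "{a,b,c,d} \<subseteq> V" "{a,b} \<in> E" "{b,c} \<in> E" "{c,d} \<in> E" "{d,a} \<in> E"
    using assms(6) unfolding induced_C4_def by auto
  have nM: "{a,b} \<notin> M" "{b,c} \<notin> M" "{c,d} \<notin> M" "{d,a} \<notin> M"
    using assms(4,5,7) by auto
  have eqs: "{a,d} = {d,a}" "{b,a} = {a,b}" "{c,b} = {b,c}" "{d,c} = {c,d}" by auto
  have 1: "C4_edges a b c d \<inter> M = {}" using nM unfolding C4_edges_def by auto
  have 2: "e \<in> M" if e: "e \<in> outgoing E {a,b,c,d}" for e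
  proof -
    have ec: "e \<in> E \<and> card (e \<inter> {a,b,c,d}) = 1" using e(1) unfolding outgoing_def by (rule CollectD)
    have eE: "e \<in> E" using ec by (rule conjunct1)
    have c1: "card (e \<inter> {a,b,c,d}) = 1" using ec by (rule conjunct2)
    have "\<exists>v. e \<inter> {a,b,c,d} = {v}" using c1 by (simp only: One_nat_def card_1_singleton_iff)
    then obtain v where v: "e \<inter> {a,b,c,d} = {v}" ..
    have vin: "v \<in> e \<inter> {a,b,c,d}" unfolding v by (rule singletonI)
    have ve: "v \<in> e" using vin by (rule IntD1)
    have vC: "v \<in> {a,b,c,d}" using vin by (rule IntD2)
    have uq: "x = v" if "x \<in> e" "x \<in> {a,b,c,d}" for x
    proof -
      have "x \<in> e \<inter> {a,b,c,d}" using that by (rule IntI)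
      then show "x = v" unfolding v by (rule singletonD)
    qed
    have "v = a \<or> v = b \<or> v = c \<or> v = d" using vC by simp
    then show ?thesis
    proof (elim disjE)
      assume vv: "v = a"
      have n: "b \<notin> e" "d \<notin> e" using uq[of b] uq[of d] D vv by auto
      have h0: "a \<in> V" using I by auto
      have h1: "{a,b} \<in> E" "{a,d} \<in> E" "{a,b} \<notin> M" "{a,d} \<notin> M" using I nM eqs by auto
      have h2: "a \<in> e" using ve vv by simp
      show ?thesis using D by (intro out_in_M[OF assms(1,2) h0 _ h1 eE h2 n]) simp
    next
      assume vv: "v = b"
      have n: "a \<notin> e" "c \<notin> e" using uq[of a] uq[of c] D vv by auto
      have h0: "b \<in> V" using I by auto
      have h1: "{b,a} \<in> E" "{b,c} \<in> E" "{b,a} \<notin> M" "{b,c} \<notin> M" using I nM eqs by auto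
      have h2: "b \<in> e" using ve vv by simp
      show ?thesis using D by (intro out_in_M[OF assms(1,2) h0 _ h1 eE h2 n]) simp
    next
      assume vv: "v = c"
      have n: "b \<notin> e" "d \<notin> e" using uq[of b] uq[of d] D vv by auto
      have h0: "c \<in> V" using I by auto
      have h1: "{c,b} \<in> E" "{c,d} \<in> E" "{c,b} \<notin> M" "{c,d} \<notin> M" using I nM eqs by auto
      have h2: "c \<in> e" using ve vv by simp
      show ?thesis using D by (intro out_in_M[OF assms(1,2) h0 _ h1 eE h2 n]) simp
    next
      assume vv: "v = d"
      have n: "a \<notin> e" "c \<notin> e" using uq[of a] uq[of c] D vv by auto
      have h0: "d \<in> V" using I by auto
      have h1: "{d,a} \<in> E" "{d,c} \<in> E" "{d,a} \<notin> M" "{d,c} \<notin> M" using I nM eqs by auto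
      have h2: "d \<in> e" using ve vv by simp
      show ?thesis using D by (intro out_in_M[OF assms(1,2) h0 _ h1 eE h2 n]) simp
    qed
  qed
  show ?thesis unfolding isA_def using 1 2 by auto
qed

lemma uniqM: "perfect_matching V E M \<Longrightarrow> simple_graph V E \<Longrightarrow> e \<in> M \<Longrightarrow> f \<in> M \<Longrightarrow> v \<in> e \<Longrightarrow> v \<in> f \<Longrightarrow> e = f"
  unfolding perfect_matching_def simple_graph_def by blast

lemma caseB:
  assumes "cubic V E" "perfect_matching V E M" "X \<union> Y = V" "X \<inter> Y = {}"
    "M = {e\<in>E. e \<inter> X \<noteq> {} \<and> e \<inter> Y \<noteq> {}}" "induced_C4 V E a b c d"
    "a \<in> X" "b \<in> X" "c \<in> Y" "d \<in> Y"
  shows "isB E M a b c d"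
proof -
  have sg: "simple_graph V E" using assms(1) unfolding cubic_def by auto
  have D: "a \<noteq> b \<and> a \<noteq> c \<and> a \<noteq> d \<and> b \<noteq> c \<and> b \<noteq> d \<and> c \<noteq> d" using dist[OF assms(6)] .
  have I: "{a,b,c,d} \<subseteq> V" "{a,b} \<in> E" "{b,c} \<in> E" "{c,d} \<in> E" "{d,a} \<in> E"
    using assms(6) unfolding induced_C4_def by auto
  have nM: "{a,b} \<notin> M" "{b,c} \<in> M" "{c,d} \<notin> M" "{d,a} \<in> M"
    using assms(4,5,7-10) I by auto
  have S: "C4_edges a b c d \<inter> M = {{b,c},{d,a}}" using nM unfolding C4_edges_def by auto
  have ne: "{b,c} \<noteq> {d,a}" using D by (auto simp: doubleton_eq_iff)
  have 1: "card (C4_edges a b c d \<inter> M) = 2" using S ne by simp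
  have 2: "\<forall>e\<in>C4_edges a b c d \<inter> M. \<forall>f\<in>C4_edges a b c d \<inter> M. e \<noteq> f \<longrightarrow> e \<inter> f = {}"
    using S D by auto
  have 3: False if e: "e \<in> outgoing E {a,b,c,d}" "e \<in> M" for e
  proof -
    have ec: "e \<in> E \<and> card (e \<inter> {a,b,c,d}) = 1" using e(1) unfolding outgoing_def by (rule CollectD)
    have eE: "e \<in> E" using ec by (rule conjunct1)
    have c1: "card (e \<inter> {a,b,c,d}) = 1" using ec by (rule conjunct2)
    have "\<exists>v. e \<inter> {a,b,c,d} = {v}" using c1 by (simp only: One_nat_def card_1_singleton_iff)
    then obtain v where v: "e \<inter> {a,b,c,d} = {v}" ..
    have vin: "v \<in> e \<inter> {a,b,c,d}" unfolding v by (rule singletonI)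
    have ve: "v \<in> e" using vin by (rule IntD1)
    have vC: "v \<in> {a,b,c,d}" using vin by (rule IntD2)
    have uq: "x = v" if "x \<in> e" "x \<in> {a,b,c,d}" for x
    proof -
      have "x \<in> e \<inter> {a,b,c,d}" using that by (rule IntI)
      then show "x = v" unfolding v by (rule singletonD)
    qed
    have "\<exists>g\<in>M. v \<in> g \<and> g \<subseteq> {a,b,c,d} \<and> card g = 2"
    proof -
      have "v = a \<or> v = b \<or> v = c \<or> v = d" using vC by simp
      moreover have "v \<in> {d,a} \<Longrightarrow> ?thesis" using nM D by (intro bexI[where x="{d,a}"]) auto
      moreover have "v \<in> {b,c} \<Longrightarrow> ?thesis" using nM D by (intro bexI[where x="{b,c}"]) auto
      ultimately show ?thesis by blast
    qed
    then obtain g where g: "g \<in> M" "v \<in> g" "g \<subseteq> {a,b,c,d}" "card g = 2" by blast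
    have "e = g" using uniqM[OF assms(2) sg e(2) g(1) ve g(2)] .
    then have "e \<inter> {a,b,c,d} = g" using g by auto
    then show False using c1 g by simp
  qed
  show ?thesis unfolding isB_def using 1 2 3 by blast
qed

lemma bad:
  assumes "perfect_matching V E M" "simple_graph V E" "X \<inter> Y = {}"
    "M = {e\<in>E. e \<inter> X \<noteq> {} \<and> e \<inter> Y \<noteq> {}}" "induced_C4 V E a b c d"
    "a \<in> X" "b \<in> Y" "d \<in> Y"
  shows False
proof -
  have D: "a \<noteq> b \<and> a \<noteq> c \<and> a \<noteq> d \<and> b \<noteq> c \<and> b \<noteq> d \<and> c \<noteq> d" using dist[OF assms(5)] .
  have I: "{a,b} \<in> E" "{d,a} \<in> E"
    using assms(5) unfolding induced_C4_def by auto
  have "{a,b} \<in> M" "{d,a} \<in> M" using assms(4,6-8) I by auto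
  then have "{a,b} = {d,a}" using uniqM[OF assms(1,2)] by blast
  then show False using D by (auto simp: doubleton_eq_iff)
qed

theorem lemma3:
  fixes V :: "'a set" and E M :: "'a set set" and a b c d :: 'a
  assumes "cubic V E"
    and "perfect_matching_cut V E M"
    and "induced_C4 V E a b c d"
  shows "let EC = C4_edges a b c d; Out = outgoing E {a,b,c,d};
             A = (EC \<inter> M = {} \<and> Out \<subseteq> M);
             B = (card (EC \<inter> M) = 2 \<and> (\<forall>e\<in>EC \<inter> M. \<forall>f\<in>EC \<inter> M. e \<noteq> f \<longrightarrow> e \<inter> f = {})
                  \<and> Out \<inter> M = {})
         in (A \<and> \<not> B) \<or> (B \<and> \<not> A)"
proof -
  have pm: "perfect_matching V E M" using assms(2) unfolding perfect_matching_cut_def by auto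
  have sg: "simple_graph V E" using assms(1) unfolding cubic_def by auto
  obtain X Y where XY: "X \<union> Y = V" "X \<inter> Y = {}" "M = {e\<in>E. e \<inter> X \<noteq> {} \<and> e \<inter> Y \<noteq> {}}"
    using assms(2) unfolding perfect_matching_cut_def cutset_def by blast
  have XY': "Y \<union> X = V" "Y \<inter> X = {}" "M = {e\<in>E. e \<inter> Y \<noteq> {} \<and> e \<inter> X \<noteq> {}}" using XY by auto
  have r1: "induced_C4 V E b c d a" using ind_rot[OF assms(3)] .
  have r2: "induced_C4 V E c d a b" using ind_rot[OF r1] .
  have r3: "induced_C4 V E d a b c" using ind_rot[OF r2] .
  have inV: "a \<in> V" "b \<in> V" "c \<in> V" "d \<in> V" using assms(3) unfolding induced_C4_def by auto
  note bads = bad[OF pm sg XY(2,3) assms(3)] bad[OF pm sg XY(2,3) r1] bad[OF pm sg XY(2,3) r2]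
     bad[OF pm sg XY(2,3) r3] bad[OF pm sg XY'(2,3) assms(3)] bad[OF pm sg XY'(2,3) r1]
     bad[OF pm sg XY'(2,3) r2] bad[OF pm sg XY'(2,3) r3]
  note Bs = caseB[OF assms(1) pm XY assms(3)] caseB[OF assms(1) pm XY r1] caseB[OF assms(1) pm XY r2]
     caseB[OF assms(1) pm XY r3] caseB[OF assms(1) pm XY' assms(3)] caseB[OF assms(1) pm XY' r1]
     caseB[OF assms(1) pm XY' r2] caseB[OF assms(1) pm XY' r3]
  note As = caseA[OF assms(1) pm XY assms(3)] caseA[OF assms(1) pm XY' assms(3)]
  have rB: "isB E M b c d a = isB E M a b c d" "isB E M c d a b = isB E M a b c d"
    "isB E M d a b c = isB E M a b c d" using isB_rot by metis+
  have "isA E M a b c d \<or> isB E M a b c d"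
  proof -
    have V: "\<And>v. v \<in> V \<Longrightarrow> (v \<in> X) \<noteq> (v \<in> Y)" using XY(1,2) by blast
    show ?thesis
    proof (cases "a \<in> X"; cases "b \<in> X"; cases "c \<in> X"; cases "d \<in> X")
    qed (use V inV bads Bs As rB in \<open>simp_all\<close>)
  qed
  moreover have "\<not> (isA E M a b c d \<and> isB E M a b c d)" unfolding isA_def isB_def by auto
  ultimately show ?thesis unfolding Let_def isA_def[symmetric] isB_def[symmetric] by blast
qed

end
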